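(* For any pair of simplices $\sigma,\tau$ on $\gamma_d$, exactly one of the following four cases occurs: (A) $\sigma$ and $\tau$ do not overlap in $\mathbb{R}^d$; equivalently, they are not $(d+2)$-interlacing. (B) $\sigma<_{d+1}\tau$; equivalently, $\sigma,\tau$ are $(d+2)$-interlacing with a sequence beginning with an element of $\sigma$ but not with one beginning with an element of $\tau$ when $d$ is even, and with a sequence beginning with an element of $\tau$ but not with one beginning with an element of $\sigma$ when $d$ is odd. (C) $\tau<_{d+1}\sigma$; equivalently, the condition of (B) holds with the roles of $\sigma$ and $\tau$ interchanged. (D) the liftings $\hat\sigma$ and $\hat\tau$ overlap in $\mathbb{R}^{d+1}$; equivalently, $\sigma$ and $\tau$ are $(d+3)$-interlacing.
   Context: $\gamma_d=\{(t,t^2,\dots,t^d):t\in\mathbb{R}\}$; points on it are ordered by parameter. A simplex on $\gamma_d$ is a subset $\sigma\subseteq\gamma_d$ with $|\sigma|\le d+1$ (sizes of $\sigma,\tau$ may differ), identified with $\mathrm{conv}(\sigma)$. Simplices overlap in $\mathbb{R}^d$ if $\mathrm{conv}(\sigma)\cap\mathrm{conv}(\tau)\supsetneq\mathrm{conv}(\sigma\cap\tau)$. Subsets $\sigma,\tau$ are $k$-interlacing if there are $v_1<\dots<v_k$ in $\sigma\cup\tau$ with alternating membership, beginning either with $v_1\in\sigma$ ($v_1\in\sigma,v_2\in\tau,\dots$) or with $v_1\in\tau$ ($v_1\in\tau,v_2\in\sigma,\dots$). The lifting of $\sigma=\{\gamma_d(t_i)\}$ is $\hat\sigma=\{\gamma_{d+1}(t_i)\}\subseteq\mathbb{R}^{d+1}$;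 the height function $h_\sigma:\mathrm{conv}(\sigma)\to\mathbb{R}$ gives the last coordinate of the point of $\mathrm{conv}(\hat\sigma)$ projecting to $p$. $\sigma<_{d+1}\tau$ means $\sigma,\tau$ overlap in $\mathbb{R}^d$ and $h_\sigma\le h_\tau$ on $\mathrm{conv}(\sigma)\cap\mathrm{conv}(\tau)$. *)

theory Defs
  imports "HOL-Analysis.Analysis"
begin

text \<open>Points of R^d are represented as functions nat => real whose coordinates
  1..d carry the point (all other coordinates are 0). The moment curve:\<close>
definition moment :: "nat \<Rightarrow> real \<Rightarrow> (nat \<Rightarrow> real)" where
  "moment d t = (\<lambda>i. if 1 \<le> i \<and> i \<le> d then t ^ i else 0)"

text \<open>A simplex on gamma_d is given by its (finite) set of parameters, with at most d+1 elements.\<close>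
definition simplex_on :: "nat \<Rightarrow> real set \<Rightarrow> bool" where
  "simplex_on d S \<longleftrightarrow> finite S \<and> card S \<le> d + 1"

definition conv :: "nat \<Rightarrow> real set \<Rightarrow> (nat \<Rightarrow> real) set" where
  "conv d S = {p. \<exists>u. (\<forall>t\<in>S. 0 \<le> u t) \<and> sum u S = 1 \<and>
                       p = (\<lambda>i. \<Sum>t\<in>S. u t * moment d t i)}"

definition overlap :: "nat \<Rightarrow> real set \<Rightarrow> real set \<Rightarrow> bool" where
  "overlap d \<sigma> \<tau> \<longleftrightarrow> conv d (\<sigma> \<inter> \<tau>) \<subset> conv d \<sigma> \<inter> conv d \<tau>"

text \<open>k-interlacing sequence v_1 < ... < v_k starting in A (v_1 \<in> A, v_2 \<in> B, ...);
  index i = 0..k-1 corresponds to v_(i+1).\<close>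
definition interlacing_from :: "nat \<Rightarrow> real set \<Rightarrow> real set \<Rightarrow> bool" where
  "interlacing_from k A B \<longleftrightarrow>
     (\<exists>v :: nat \<Rightarrow> real. strict_mono_on {..<k} v \<and>
        (\<forall>i<k. (if even i then v i \<in> A else v i \<in> B)))"

definition interlacing :: "nat \<Rightarrow> real set \<Rightarrow> real set \<Rightarrow> bool" where
  "interlacing k \<sigma> \<tau> \<longleftrightarrow> interlacing_from k \<sigma> \<tau> \<or> interlacing_from k \<tau> \<sigma>"

definition proj :: "nat \<Rightarrow> (nat \<Rightarrow> real) \<Rightarrow> (nat \<Rightarrow> real)" where
  "proj d q = (\<lambda>i. if 1 \<le> i \<and> i \<le> d then q i else 0)"

text \<open>Height function: last coordinate of the point of conv(lifting of sigma)
  (the lifting lives on gamma_(d+1)) projecting to p.\<close>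
definition height :: "nat \<Rightarrow> real set \<Rightarrow> (nat \<Rightarrow> real) \<Rightarrow> real" where
  "height d \<sigma> p = (THE y. \<exists>q\<in>conv (d + 1) \<sigma>. proj d q = p \<and> q (d + 1) = y)"

definition below :: "nat \<Rightarrow> real set \<Rightarrow> real set \<Rightarrow> bool" where
  "below d \<sigma> \<tau> \<longleftrightarrow> overlap d \<sigma> \<tau> \<and>
     (\<forall>p \<in> conv d \<sigma> \<inter> conv d \<tau>. height d \<sigma> p \<le> height d \<tau> p)"

end

theory Submission
  imports Defs "HOL-Computational_Algebra.Polynomial"
begin


lemma monic_lin_prod:
  fixes R :: "real set"
  assumes "finite R"
  shows "degree (\<Prod>r\<in>R. [:-r, 1:]) = card R \<and> coeff (\<Prod>r\<in>R. [:-r, 1:]) (card R) = 1"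
proof -
  have d: "degree (\<Prod>r\<in>R. [:-r, 1:]) = card R"
    by (subst degree_prod_eq_sum_degree) (auto simp: assms)
  have "lead_coeff (\<Prod>r\<in>R. [:-r, 1:]) = 1"
    by (subst lead_coeff_prod) auto
  with d show ?thesis by simp
qed

lemma dd_moment:
  fixes P :: "real set"
  assumes fin: "finite P" and cP: "card P = Suc n" and jn: "j \<le> n"
  shows "(\<Sum>t\<in>P. t ^ j / (\<Prod>r\<in>P-{t}. (t - r))) = (if j = n then 1 else 0)"
proof -
  define L where "L = (\<Sum>t\<in>P. smult (t ^ j / (\<Prod>r\<in>P-{t}. (t - r))) (\<Prod>r\<in>P-{t}. [:-r, 1:]))"
  have cardm: "card (P - {t}) = n" if "t \<in> P" for t using that cP fin by simp
  have pne: "(\<Prod>r\<in>P-{t}. (t - r)) \<noteq> 0" for t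
    using fin by (simp add: prod_zero_iff)
  have polyL: "poly L s = s ^ j" if s: "s \<in> P" for s
  proof -
    have z: "poly (smult (t ^ j / (\<Prod>r\<in>P-{t}. (t - r))) (\<Prod>r\<in>P-{t}. [:-r, 1:])) s = 0"
      if "t \<in> P" "t \<noteq> s" for t
    proof -
      have "(\<Prod>r\<in>P-{t}. poly [:-r, 1:] s) = 0"
        using fin s that by (subst prod_zero_iff) auto
      thus ?thesis by (simp add: poly_prod)
    qed
    have "poly L s = (\<Sum>t\<in>P. poly (smult (t ^ j / (\<Prod>r\<in>P-{t}. (t - r))) (\<Prod>r\<in>P-{t}. [:-r, 1:])) s)"
      unfolding L_def by (simp add: poly_sum)
    also have "\<dots> = poly (smult (s ^ j / (\<Prod>r\<in>P-{s}. (s - r))) (\<Prod>r\<in>P-{s}. [:-r, 1:])) s"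
    proof -
      have "(\<Sum>t\<in>P-{s}. poly (smult (t ^ j / (\<Prod>r\<in>P-{t}. (t - r))) (\<Prod>r\<in>P-{t}. [:-r, 1:])) s) = 0"
        by (rule sum.neutral) (use z in blast)
      thus ?thesis by (simp add: sum.remove[OF fin s])
    qed
    also have "\<dots> = s ^ j" using pne[of s] by (simp add: poly_prod)
    finally show ?thesis .
  qed
  have degL: "degree L \<le> n"
    unfolding L_def
    by (rule degree_sum_le) (use fin monic_lin_prod cardm in \<open>auto intro: order.trans[OF degree_smult_le]\<close>)
  have "L = monom 1 j"
    by (rule poly_eqI_degree[where A = P]) (use polyL degL cP jn in \<open>auto simp: poly_monom degree_monom_eq\<close>)
  hence "coeff L n = (if j = n then 1 else 0)" by (simp add: coeff_monom)
  moreover have "coeff L n = (\<Sum>t\<in>P. t ^ j / (\<Prod>r\<in>P-{t}. (t - r)))"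
  proof -
    have c1: "coeff (\<Prod>r\<in>P-{t}. [:-r, 1:]) n = 1" if "t \<in> P" for t
      using monic_lin_prod[of "P-{t}"] cardm[OF that] fin by simp
    show ?thesis unfolding L_def coeff_sum coeff_smult
      by (rule sum.cong) (simp_all add: c1)
  qed
  ultimately show ?thesis by simp
qed



lemma prod_sign:
  fixes P :: "real set"
  assumes fin: "finite P"
  shows "(-1) ^ card {r\<in>P. t < r} * (\<Prod>r\<in>P-{t}. (t - r)) > 0"
proof -
  have split: "P - {t} = {r\<in>P. r < t} \<union> {r\<in>P. t < r}" by auto
  have "(\<Prod>r\<in>P-{t}. (t - r)) = (\<Prod>r\<in>{r\<in>P. r < t}. (t - r)) * (\<Prod>r\<in>{r\<in>P. t < r}. (t - r))"
    unfolding split by (rule prod.union_disjoint) (use fin in auto)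
  moreover have "(\<Prod>r\<in>{r\<in>P. t < r}. (t - r)) = (\<Prod>r\<in>{r\<in>P. t < r}. (-1) * (r - t))"
    by (rule prod.cong) auto
  moreover have "\<dots> = (-1) ^ card {r\<in>P. t < r} * (\<Prod>r\<in>{r\<in>P. t < r}. (r - t))"
    by (simp only: prod.distrib prod_constant)
  moreover have "(\<Prod>r\<in>{r\<in>P. r < t}. (t - r)) > 0" by (rule prod_pos) auto
  moreover have "(\<Prod>r\<in>{r\<in>P. t < r}. (r - t)) > 0" by (rule prod_pos) auto
  moreover have "((-1::real) ^ card {r\<in>P. t < r}) * (-1) ^ card {r\<in>P. t < r} = 1"
    by (simp add: power_mult_distrib[symmetric])
  ultimately show ?thesis
  proof -
    assume a: "(\<Prod>r\<in>P-{t}. (t - r)) = (\<Prod>r\<in>{r\<in>P. r < t}. (t - r)) * (\<Prod>r\<in>{r\<in>P. t < r}. (t - r))"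
      "(\<Prod>r\<in>{r\<in>P. t < r}. (t - r)) = (\<Prod>r\<in>{r\<in>P. t < r}. (-1) * (r - t))"
      "(\<Prod>r\<in>{r\<in>P. t < r}. (-1) * (r - t)) = (-1) ^ card {r\<in>P. t < r} * (\<Prod>r\<in>{r\<in>P. t < r}. (r - t))"
      "(\<Prod>r\<in>{r\<in>P. r < t}. (t - r)) > 0" "(\<Prod>r\<in>{r\<in>P. t < r}. (r - t)) > 0"
      "((-1::real) ^ card {r\<in>P. t < r}) * (-1) ^ card {r\<in>P. t < r} = 1"
    define A where "A = (\<Prod>r\<in>{r\<in>P. r < t}. (t - r))"
    define B where "B = (\<Prod>r\<in>{r\<in>P. t < r}. (r - t))"
    define E where "E = ((-1::real) ^ card {r\<in>P. t < r})"
    have "(\<Prod>r\<in>P-{t}. (t - r)) = A * (E * B)" unfolding A_def B_def E_def by (simp only: a(1) a(2) a(3))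
    hence "E * (\<Prod>r\<in>P-{t}. (t - r)) = (E * E) * (A * B)" by (simp add: mult_ac)
    also have "\<dots> = A * B" using a(6) unfolding E_def by simp
    also have "\<dots> > 0" using a(4,5) unfolding A_def B_def by simp
    finally show ?thesis unfolding E_def .
  qed
qed

lemma sign3: "(a::real) * y < 0 \<Longrightarrow> x * y < 0 \<Longrightarrow> a * x > 0"
  by (smt (verit) mult_less_0_iff zero_less_mult_iff)

lemma sign4: "(x::real) * y > 0 \<Longrightarrow> p * r > 0 \<Longrightarrow> u * r > 0 \<Longrightarrow> u * y < 0 \<Longrightarrow> x * p < 0"
  by (smt (verit) mult_less_0_iff zero_less_mult_iff)

lemma pos_of_nonneg: "(0::real) \<le> x * y \<Longrightarrow> x \<noteq> 0 \<Longrightarrow> y \<noteq> 0 \<Longrightarrow> x * y > 0"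
  by (simp add: less_le)

definition alt :: "(real \<Rightarrow> real) \<Rightarrow> real set \<Rightarrow> nat \<Rightarrow> bool" where
  "alt l S k \<longleftrightarrow> (\<exists>w s. (s = 1 \<or> s = -1) \<and> strict_mono_on {..<k} w \<and>
      (\<forall>i<k. w i \<in> S \<and> (-1) ^ i * s * l (w i) > 0))"

lemma smo_le: "strict_mono_on {..<k::nat} w \<Longrightarrow> i \<le> j \<Longrightarrow> j < k \<Longrightarrow> w i \<le> (w j :: real)"
proof (cases "i = j")
  case False
  assume a: "strict_mono_on {..<k} w" "i \<le> j" "j < k"
  have "w i < w j" by (rule strict_mono_onD[OF a(1)]) (use a False in auto)
  thus ?thesis by simp
qed simp

lemma alt_poly:
  fixes l :: "real \<Rightarrow> real"
  assumes "finite S" "\<not> alt l S (n+2)"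
  shows "\<exists>q::real poly. degree q \<le> n \<and> (\<forall>t\<in>S. l t * poly q t \<ge> 0) \<and>
           (\<forall>t\<in>S. l t \<noteq> 0 \<longrightarrow> poly q t \<noteq> 0) \<and> (\<forall>x. (\<forall>t\<in>S. t \<le> x) \<longrightarrow> poly q x \<noteq> 0)"
  using assms
proof (induction n arbitrary: S rule: less_induct)
  case (less n S)
  note fin = less.prems(1) and nalt = less.prems(2)
  define Z where "Z = {t\<in>S. l t \<noteq> 0}"
  have finZ: "finite Z" using fin unfolding Z_def by simp
  show ?case
  proof (cases "Z = {}")
    case True
    then show ?thesis by (intro exI[of _ 1]) (auto simp: Z_def)
  next
    case Zne: False
    define z where "z = Max Z"
    have zZ: "z \<in> Z" using Zne finZ unfolding z_def by simp
    have zmax: "t \<in> Z \<Longrightarrow> t \<le> z" for t using finZ unfolding z_def by simp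
    define N where "N = {t\<in>S. l t * l z < 0}"
    have finN: "finite N" using fin unfolding N_def by simp
    show ?thesis
    proof (cases "N = {}")
      case True
      hence "\<forall>t\<in>S. l t * l z \<ge> 0" unfolding N_def by auto
      moreover have "l z \<noteq> 0" using zZ unfolding Z_def by auto
      ultimately show ?thesis by (intro exI[of _ "[:l z:]"]) auto
    next
      case Nne: False
      define b where "b = Max N"
      have bN: "b \<in> N" using Nne finN unfolding b_def by simp
      have bmax: "t \<in> N \<Longrightarrow> t \<le> b" for t using finN unfolding b_def by simp
      have bS: "b \<in> S" and lblz: "l b * l z < 0" using bN unfolding N_def by auto
      have lz0: "l z \<noteq> 0" and zS: "z \<in> S" using zZ unfolding Z_def by auto
      have bZ: "b \<in> Z" using bS lblz unfolding Z_def by auto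
      have bz: "b < z"
      proof -
        have "b \<le> z" using zmax bZ by simp
        moreover have "b \<noteq> z"
        proof
          assume "b = z"
          with lblz show False by (simp add: not_square_less_zero)
        qed
        ultimately show ?thesis by simp
      qed
      have after: "l t * l z \<ge> 0" if tS: "t \<in> S" and bt: "b < t" for t
      proof (rule ccontr)
        assume "\<not> l t * l z \<ge> 0"
        hence "t \<in> N" using tS unfolding N_def by simp
        hence "t \<le> b" by (rule bmax)
        with bt show False by simp
      qed
      obtain m where nm: "n = Suc m"
      proof (cases n)
        case 0
        define s :: real where "s = (if l b > 0 then 1 else -1)"
        define w :: "nat \<Rightarrow> real" where "w = (\<lambda>i. if i = 0 then b else z)"
        have "alt l S 2"
          unfolding alt_def
        proof (intro exI[of _ w] exI[of _ s] conjI)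
          show "s = 1 \<or> s = -1" unfolding s_def by auto
          show "strict_mono_on {..<2} w"
            by (rule strict_mono_onI) (auto simp: w_def bz less_2_cases_iff)
          show "\<forall>i<2. w i \<in> S \<and> 0 < (- 1) ^ i * s * l (w i)"
            using bS zS lblz by (auto simp: w_def s_def less_2_cases_iff mult_less_0_iff)
        qed
        thus ?thesis using nalt 0 by (simp add: numeral_2_eq_2)
      qed
      define S' where "S' = {t\<in>S. t \<le> b}"
      have finS': "finite S'" using fin unfolding S'_def by simp
      have nalt': "\<not> alt l S' (m+2)"
      proof
        assume "alt l S' (m+2)"
        then obtain w s where s: "s = 1 \<or> s = -1" and smo: "strict_mono_on {..<m+2} w"
          and ws: "\<forall>i<m+2. w i \<in> S' \<and> (-1) ^ i * s * l (w i) > 0"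
          unfolding alt_def by blast
        have wl: "w (m+1) \<in> S'" "(-1) ^ (m+1) * s * l (w (m+1)) > 0" using ws by auto
        obtain y where yS: "y \<in> S" and yw: "w (m+1) < y" and ysg: "(-1) ^ (m+2) * s * l y > 0"
        proof (cases "(-1) ^ (m+2) * s * l z > 0")
          case True
          moreover have "w (m+1) < z" using wl(1) bz unfolding S'_def by auto
          ultimately show ?thesis using that zS by blast
        next
          case False
          have e: "(-1::real) ^ (m+2) = - ((-1) ^ (m+1))" by simp
          have sgn: "(-1) ^ (m+2) * s * l b > 0"
          proof -
            have "(-1) ^ (m+2) * s * l z \<noteq> 0" using s lz0 by auto
            with False have "(-1) ^ (m+2) * s * l z < 0" by linarith
            from sign3[OF this lblz] show ?thesis .
          qed
          have "w (m+1) \<le> b" using wl(1) unfolding S'_def by auto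
          moreover have "w (m+1) \<noteq> b"
          proof
            assume "w (m+1) = b"
            have "(-1) ^ (m+2) * s * l b = - ((-1) ^ (m+1) * s * l b)" by (simp only: e)
            with wl(2) sgn \<open>w (m+1) = b\<close> show False by simp
          qed
          ultimately show ?thesis using that bS sgn by simp
        qed
        define w' where "w' = w(m+2 := y)"
        have "alt l S (n+2)"
          unfolding alt_def
        proof (intro exI[of _ w'] exI[of _ s] conjI)
          show "s = 1 \<or> s = -1" by fact
          show "strict_mono_on {..<n+2} w'"
          proof (rule strict_mono_onI)
            fix i j assume ij: "i \<in> {..<n+2}" "j \<in> {..<n+2}" "i < j"
            show "w' i < w' j"
            proof (cases "j = m+2")
              case True
              hence "i \<le> m+1" using ij by simp
              hence "w i \<le> w (m+1)" by (intro smo_le[OF smo]) auto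
              thus ?thesis using True yw ij unfolding w'_def by auto
            next
              case False
              thus ?thesis using ij nm strict_mono_onD[OF smo, of i j] unfolding w'_def by auto
            qed
          qed
          show "\<forall>i<n+2. w' i \<in> S \<and> 0 < (- 1) ^ i * s * l (w' i)"
          proof (intro allI impI)
            fix i assume "i < n+2"
            thus "w' i \<in> S \<and> 0 < (- 1) ^ i * s * l (w' i)"
              using ws yS ysg nm unfolding w'_def S'_def by (cases "i = m+2") auto
          qed
        qed
        thus False using nalt by simp
      qed
      obtain q' where dq': "degree q' \<le> m" and q'1: "\<forall>t\<in>S'. l t * poly q' t \<ge> 0"
        and q'2: "\<forall>t\<in>S'. l t \<noteq> 0 \<longrightarrow> poly q' t \<noteq> 0"
        and q'3: "\<forall>x. (\<forall>t\<in>S'. t \<le> x) \<longrightarrow> poly q' x \<noteq> 0"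
        using less.IH[of m S'] nm finS' nalt' by auto
      have bS': "b \<in> S'" using bS unfolding S'_def by simp
      have lbq: "l b * poly q' b > 0"
      proof -
        have "l b \<noteq> 0" using bZ unfolding Z_def by simp
        moreover have "poly q' b \<noteq> 0" using q'2 bS' \<open>l b \<noteq> 0\<close> by blast
        ultimately show ?thesis using q'1 bS' pos_of_nonneg by blast
      qed
      have q'sg: "poly q' x * poly q' b > 0" if "b \<le> x" for x
      proof (rule ccontr)
        assume "\<not> ?thesis"
        moreover have "poly q' x \<noteq> 0" using q'3 that unfolding S'_def by force
        moreover have "poly q' b \<noteq> 0" using lbq by auto
        ultimately have neg: "poly q' b * poly q' x < 0"
        proof -
          assume a: "\<not> 0 < poly q' x * poly q' b" "poly q' x \<noteq> 0" "poly q' b \<noteq> 0"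
          have "poly q' x * poly q' b \<noteq> 0" using a by simp
          moreover have "poly q' b * poly q' x = poly q' x * poly q' b" by (rule mult.commute)
          ultimately show ?thesis using a(1) by linarith
        qed
        have "b < x"
        proof (rule ccontr)
          assume "\<not> b < x"
          hence "x = b" using that by simp
          thus False using neg by (simp add: not_square_less_zero)
        qed
        then obtain r where "b < r" "r < x" "poly q' r = 0" using poly_IVT[OF _ neg] by blast
        moreover have "poly q' r \<noteq> 0" using q'3 \<open>b < r\<close> unfolding S'_def by force
        ultimately show False by simp
      qed
      define M where "M = {t\<in>Z. b < t}"
      have finM: "finite M" using finZ unfolding M_def by simp
      have zM: "z \<in> M" using zZ bz unfolding M_def by simp
      define nx where "nx = Min M"
      have nxM: "nx \<in> M" using finM zM unfolding nx_def by (metis Min_in empty_iff)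
      have nxmin: "t \<in> M \<Longrightarrow> nx \<le> t" for t using finM unfolding nx_def by simp
      define c where "c = (b + nx) / 2"
      have bnx: "b < nx" using nxM unfolding M_def by simp
      have bc: "b < c" and cnx: "c < nx" using bnx unfolding c_def by auto
      define q where "q = q' * [:c, -1:]"
      have polyq: "poly q x = poly q' x * (c - x)" for x unfolding q_def by (simp add: algebra_simps)
      show ?thesis
      proof (intro exI[of _ q] conjI ballI allI impI)
        have "degree [:c, -1::real:] = 1" by simp
        thus "degree q \<le> n" unfolding q_def using degree_mult_le[of q' "[:c,-1:]"] dq' nm by simp
      next
        fix t assume tS: "t \<in> S"
        show "0 \<le> l t * poly q t"
        proof (cases "t \<le> b")
          case True
          hence "t \<in> S'" using tS unfolding S'_def by simp
          hence "0 \<le> l t * poly q' t" using q'1 by blast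
          moreover have "c - t > 0" using True bc by simp
          ultimately show ?thesis unfolding polyq by (simp add: mult.assoc[symmetric])
        next
          case False
          show ?thesis
          proof (cases "l t = 0")
            case False
            have tM: "t \<in> M" using tS False \<open>\<not> t \<le> b\<close> unfolding M_def Z_def by simp
            hence "c < t" using nxmin cnx by force
            have a1: "l t * l z > 0" using after[OF tS] \<open>\<not> t \<le> b\<close> False lz0
              by (intro pos_of_nonneg) auto
            have a2: "poly q' t * poly q' b > 0" using q'sg \<open>\<not> t \<le> b\<close> by simp
            have "l t * poly q' t < 0"
              using sign4[OF a1 a2 lbq lblz] .
            thus ?thesis unfolding polyq using \<open>c < t\<close>
              by (simp add: mult.assoc[symmetric] zero_le_mult_iff)
          qed simp
        qed
      next
        fix t assume tS: "t \<in> S" and lt: "l t \<noteq> 0"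
        show "poly q t \<noteq> 0"
        proof (cases "t \<le> b")
          case True
          thus ?thesis using q'2 tS lt bc unfolding polyq S'_def by auto
        next
          case False
          have tM: "t \<in> M" using tS lt False unfolding M_def Z_def by simp
          hence "c < t" using nxmin cnx by force
          moreover have "poly q' t \<noteq> 0"
          proof -
            have "0 < poly q' t * poly q' b" using q'sg[of t] False by simp
            thus ?thesis by auto
          qed
          ultimately show ?thesis unfolding polyq by simp
        qed
      next
        fix x assume ub: "\<forall>t\<in>S. t \<le> x"
        have "z \<le> x" using ub zS by simp
        hence "c < x" using nxmin[OF zM] cnx by simp
        moreover have "poly q' x \<noteq> 0" using q'3 ub unfolding S'_def by auto
        ultimately show "poly q x \<noteq> 0" unfolding polyq by simp
      qed
    qed
  qed
qed



definition mom :: "real set \<Rightarrow> (real \<Rightarrow> real) \<Rightarrow> nat \<Rightarrow> real" where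
  "mom S l j = (\<Sum>t\<in>S. l t * t ^ j)"

lemma SC:
  assumes fin: "finite S" and m: "\<forall>j\<le>e. mom S l j = 0" and nz: "\<exists>t\<in>S. l t \<noteq> 0"
  shows "alt l S (e+2)"
proof (rule ccontr)
  assume "\<not> alt l S (e+2)"
  from alt_poly[OF fin this] obtain q :: "real poly" where dq: "degree q \<le> e"
    and q1: "\<forall>t\<in>S. l t * poly q t \<ge> 0" and q2: "\<forall>t\<in>S. l t \<noteq> 0 \<longrightarrow> poly q t \<noteq> 0" by blast
  have "(\<Sum>t\<in>S. l t * poly q t) = (\<Sum>t\<in>S. (\<Sum>i\<le>degree q. coeff q i * (l t * t ^ i)))"
    by (simp add: poly_altdef sum_distrib_left mult_ac)
  also have "\<dots> = (\<Sum>i\<le>degree q. coeff q i * mom S l i)"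
    unfolding mom_def by (subst sum.swap) (simp add: sum_distrib_left)
  also have "\<dots> = 0" using m dq by (intro sum.neutral) auto
  finally have z: "(\<Sum>t\<in>S. l t * poly q t) = 0" .
  from nz obtain t0 where t0: "t0 \<in> S" "l t0 \<noteq> 0" by blast
  have "l t0 * poly q t0 > 0" using q1 q2 t0 pos_of_nonneg by blast
  hence "(\<Sum>t\<in>S. l t * poly q t) > 0" by (rule sum_pos2[OF fin t0(1)]) (use q1 in auto)
  with z show False by simp
qed

lemma alt_card:
  assumes "alt l T k" "finite T"
  shows "k \<le> card T"
proof -
  from assms obtain w where smo: "strict_mono_on {..<k} w" and ws: "\<forall>i<k. w i \<in> T"
    unfolding alt_def by blast
  have "card (w ` {..<k}) = k"
    using strict_mono_on_imp_inj_on[OF smo] by (simp add: card_image)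
  moreover have "card (w ` {..<k}) \<le> card T" using ws assms(2) by (intro card_mono) auto
  ultimately show ?thesis by simp
qed

lemma indep:
  assumes "finite T" "card T \<le> e+1" "\<forall>j\<le>e. mom T l j = 0"
  shows "\<forall>t\<in>T. l t = 0"
proof (rule ccontr)
  assume "\<not> ?thesis"
  hence "alt l T (e+2)" using SC assms by blast
  from alt_card[OF this assms(1)] assms(2) show False by simp
qed

definition valid :: "nat \<Rightarrow> real set \<Rightarrow> real set \<Rightarrow> (real \<Rightarrow> real) \<Rightarrow> bool" where
  "valid e \<sigma> \<tau> l \<longleftrightarrow> (\<forall>j\<le>e. mom (\<sigma>\<union>\<tau>) l j = 0) \<and> (\<forall>t\<in>\<sigma>-\<tau>. l t \<ge> 0) \<and> (\<forall>t\<in>\<tau>-\<sigma>. l t \<le> 0)"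

lemma alt_interl:
  assumes "\<forall>t\<in>\<sigma>-\<tau>. l t \<ge> 0" "\<forall>t\<in>\<tau>-\<sigma>. l t \<le> 0" "alt l (\<sigma>\<union>\<tau>) k"
  shows "interlacing k \<sigma> \<tau>"
proof -
  from assms(3) obtain w s where s: "s = 1 \<or> s = -1" and smo: "strict_mono_on {..<k} w"
    and ws: "\<forall>i<k. w i \<in> \<sigma>\<union>\<tau> \<and> (-1) ^ i * s * l (w i) > 0" unfolding alt_def by blast
  have pos: "w i \<in> \<sigma>" if "i < k" "l (w i) > 0" for i
    using ws that assms(2) by force
  have neg: "w i \<in> \<tau>" if "i < k" "l (w i) < 0" for i
    using ws that assms(1) by force
  show ?thesis
  proof (cases "s = 1")
    case True
    have "interlacing_from k \<sigma> \<tau>" unfolding interlacing_from_def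
    proof (intro exI[of _ w] conjI smo allI impI)
      fix i assume i: "i < k"
      show "if even i then w i \<in> \<sigma> else w i \<in> \<tau>"
      proof (cases "even i")
        case True
        with ws i \<open>s = 1\<close> have "l (w i) > 0" by auto
        with pos i True show ?thesis by simp
      next
        case False
        with ws i \<open>s = 1\<close> have "l (w i) < 0" by auto
        with neg i False show ?thesis by simp
      qed
    qed
    thus ?thesis unfolding interlacing_def by simp
  next
    case False
    hence s1: "s = -1" using s by simp
    have "interlacing_from k \<tau> \<sigma>" unfolding interlacing_from_def
    proof (intro exI[of _ w] conjI smo allI impI)
      fix i assume i: "i < k"
      show "if even i then w i \<in> \<tau> else w i \<in> \<sigma>"
      proof (cases "even i")
        case True
        with ws i s1 have "l (w i) < 0" by auto
        with neg i True show ?thesis by simp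
      next
        case False
        with ws i s1 have "l (w i) > 0" by auto
        with pos i False show ?thesis by simp
      qed
    qed
    thus ?thesis unfolding interlacing_def by simp
  qed
qed

lemma L_from:
  assumes fin: "finite \<sigma>" "finite \<tau>" and I: "interlacing_from (e+2) \<sigma> \<tau>"
  shows "\<exists>l. valid e \<sigma> \<tau> l \<and> (\<exists>t\<in>\<sigma>\<union>\<tau>. l t \<noteq> 0) \<and> mom (\<sigma>\<union>\<tau>) l (e+1) = (-1) ^ (e+1)"
proof -
  from I obtain v where smo: "strict_mono_on {..<e+2} v"
    and vm: "\<forall>i<e+2. if even i then v i \<in> \<sigma> else v i \<in> \<tau>" unfolding interlacing_from_def by blast
  define P where "P = v ` {..<e+2}"
  have inj: "inj_on v {..<e+2}" by (rule strict_mono_on_imp_inj_on[OF smo])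
  have cP: "card P = Suc (e+1)" unfolding P_def using inj by (simp add: card_image)
  have finP: "finite P" unfolding P_def by simp
  have Psub: "P \<subseteq> \<sigma> \<union> \<tau>" unfolding P_def using vm by (auto split: if_splits)
  define c :: real where "c = (-1) ^ (e+1)"
  define l where "l = (\<lambda>t. if t \<in> P then c / (\<Prod>r\<in>P-{t}. (t - r)) else 0)"
  have finU: "finite (\<sigma> \<union> \<tau>)" using fin by simp
  have momP: "mom (\<sigma>\<union>\<tau>) l j = c * (if j = e+1 then 1 else 0)" if "j \<le> e+1" for j
  proof -
    have "mom (\<sigma>\<union>\<tau>) l j = (\<Sum>t\<in>P. l t * t ^ j)"
      unfolding mom_def by (rule sum.mono_neutral_right) (use finU Psub in \<open>auto simp: l_def\<close>)
    also have "\<dots> = (\<Sum>t\<in>P. c * (t ^ j / (\<Prod>r\<in>P-{t}. (t - r))))"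
      by (rule sum.cong) (auto simp: l_def)
    also have "\<dots> = c * (\<Sum>t\<in>P. t ^ j / (\<Prod>r\<in>P-{t}. (t - r)))" by (simp add: sum_distrib_left)
    also have "\<dots> = c * (if j = e+1 then 1 else 0)" using dd_moment[OF finP cP that] by simp
    finally show ?thesis .
  qed
  have sgn: "(-1) ^ i * l (v i) > 0" if i: "i < e+2" for i
  proof -
    have vP: "v i \<in> P" using i unfolding P_def by simp
    have set: "{r\<in>P. v i < r} = v ` {i<..<e+2}"
    proof
      show "{r\<in>P. v i < r} \<subseteq> v ` {i<..<e+2}"
      proof
        fix r assume "r \<in> {r\<in>P. v i < r}"
        then obtain j where j: "j < e+2" "r = v j" "v i < v j" unfolding P_def by auto
        have "i < j"
        proof (rule ccontr)
          assume "\<not> i < j"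
          hence "v j \<le> v i" using smo_le[OF smo, of j i] i by simp
          with j show False by simp
        qed
        thus "r \<in> v ` {i<..<e+2}" using j by auto
      qed
      show "v ` {i<..<e+2} \<subseteq> {r\<in>P. v i < r}"
        using strict_mono_onD[OF smo] i unfolding P_def by auto
    qed
    have K: "card {r\<in>P. v i < r} = e + 1 - i"
    proof -
      have "inj_on v {i<..<e+2}" using inj by (rule inj_on_subset) auto
      hence "card (v ` {i<..<e+2}) = card {i<..<e+2}" by (rule card_image)
      thus ?thesis unfolding set by simp
    qed
    define Pi where "Pi = (\<Prod>r\<in>P-{v i}. (v i - r))"
    have ps: "(-1) ^ (e + 1 - i) * Pi > 0" using prod_sign[OF finP, of "v i"] K unfolding Pi_def by simp
    have e1: "(-1::real) ^ i * c = (-1) ^ (e + 1 - i)"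
    proof -
      have h: "i + (e+1) = (e + 1 - i) + 2 * i" using i by simp
      have "(-1::real) ^ (i + (e+1)) = (-1) ^ (e + 1 - i) * ((-1) ^ 2) ^ i"
        by (simp only: h power_add power_mult)
      hence "(-1::real) ^ (i + (e+1)) = (-1) ^ (e + 1 - i)" by simp
      thus ?thesis unfolding c_def by (simp add: power_add)
    qed
    have "(-1) ^ i * l (v i) = (-1) ^ (e + 1 - i) / Pi"
      using vP e1 unfolding l_def Pi_def by simp
    also have "\<dots> > 0" using ps by (simp add: zero_less_divide_iff zero_less_mult_iff)
    finally show ?thesis .
  qed
  have valid: "valid e \<sigma> \<tau> l" unfolding valid_def
  proof (intro conjI ballI allI impI)
    fix j assume "j \<le> e" thus "mom (\<sigma>\<union>\<tau>) l j = 0" using momP[of j] by simp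
  next
    fix t assume t: "t \<in> \<sigma> - \<tau>"
    show "0 \<le> l t"
    proof (cases "t \<in> P")
      case True
      then obtain i where i: "i < e+2" "t = v i" unfolding P_def by auto
      have "even i" using vm i t by (metis DiffD2)
      thus ?thesis using sgn[OF i(1)] i by simp
    qed (simp add: l_def)
  next
    fix t assume t: "t \<in> \<tau> - \<sigma>"
    show "l t \<le> 0"
    proof (cases "t \<in> P")
      case True
      then obtain i where i: "i < e+2" "t = v i" unfolding P_def by auto
      have "odd i" using vm i t by (metis DiffD2)
      thus ?thesis using sgn[OF i(1)] i by simp
    qed (simp add: l_def)
  qed
  have "l (v 0) \<noteq> 0" using sgn[of 0] by auto
  moreover have "v 0 \<in> \<sigma> \<union> \<tau>" using Psub unfolding P_def by auto
  ultimately show ?thesis using valid momP[of "e+1"] unfolding c_def by (intro exI[of _ l]) auto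
qed



definition pt :: "nat \<Rightarrow> real set \<Rightarrow> (real \<Rightarrow> real) \<Rightarrow> (nat \<Rightarrow> real)" where
  "pt e S u = (\<lambda>i. \<Sum>t\<in>S. u t * moment e t i)"

lemma conv_iff: "p \<in> conv e S \<longleftrightarrow> (\<exists>u. (\<forall>t\<in>S. 0 \<le> u t) \<and> sum u S = 1 \<and> p = pt e S u)"
  by (simp add: conv_def pt_def)

lemma pt_eval: "pt e S u i = (if 1 \<le> i \<and> i \<le> e then (\<Sum>t\<in>S. u t * t ^ i) else 0)"
  by (auto simp: pt_def moment_def)

lemma pt_restrict:
  fixes V :: "real \<Rightarrow> real"
  assumes "finite \<sigma>" "A \<subseteq> \<sigma>"
  shows "pt e \<sigma> (\<lambda>t. if t \<in> A then V t else 0) = pt e A V"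
proof (rule ext)
  fix i
  have "(\<Sum>t\<in>\<sigma>. (if t \<in> A then V t else 0) * moment e t i) = (\<Sum>t\<in>\<sigma>. if t \<in> A then V t * moment e t i else 0)"
    by (rule sum.cong) auto
  also have "\<dots> = (\<Sum>t\<in>\<sigma> \<inter> A. V t * moment e t i)" by (rule sum.inter_restrict[OF assms(1), symmetric])
  also have "\<sigma> \<inter> A = A" using assms(2) by auto
  finally show "pt e \<sigma> (\<lambda>t. if t \<in> A then V t else 0) i = pt e A V i" by (simp add: pt_def)
qed

lemma sum_restrict:
  fixes V g :: "real \<Rightarrow> real"
  assumes "finite \<sigma>" "A \<subseteq> \<sigma>"
  shows "(\<Sum>t\<in>\<sigma>. (if t \<in> A then V t else 0) * g t) = (\<Sum>t\<in>A. V t * g t)"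
proof -
  have "(\<Sum>t\<in>\<sigma>. (if t \<in> A then V t else 0) * g t) = (\<Sum>t\<in>\<sigma>. if t \<in> A then V t * g t else 0)"
    by (rule sum.cong) auto
  also have "\<dots> = (\<Sum>t\<in>\<sigma> \<inter> A. V t * g t)" by (rule sum.inter_restrict[OF assms(1), symmetric])
  also have "\<sigma> \<inter> A = A" using assms(2) by auto
  finally show ?thesis .
qed

lemma sum_restrict1:
  fixes V :: "real \<Rightarrow> real"
  assumes "finite \<sigma>" "A \<subseteq> \<sigma>"
  shows "(\<Sum>t\<in>\<sigma>. (if t \<in> A then V t else 0)) = (\<Sum>t\<in>A. V t)"
  using sum_restrict[OF assms, of V "\<lambda>_. 1"] by simp

lemma pt_unique:
  assumes fin: "finite \<sigma>" and c: "card \<sigma> \<le> e+1" and s: "sum U \<sigma> = sum U' \<sigma>"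
    and p: "pt e \<sigma> U = pt e \<sigma> U'"
  shows "\<forall>t\<in>\<sigma>. U t = U' t"
proof -
  have "\<forall>j\<le>e. mom \<sigma> (\<lambda>t. U t - U' t) j = 0"
  proof (intro allI impI)
    fix j assume j: "j \<le> e"
    have m: "mom \<sigma> (\<lambda>t. U t - U' t) j = (\<Sum>t\<in>\<sigma>. U t * t ^ j) - (\<Sum>t\<in>\<sigma>. U' t * t ^ j)"
      unfolding mom_def by (simp add: left_diff_distrib sum_subtractf)
    show "mom \<sigma> (\<lambda>t. U t - U' t) j = 0"
    proof (cases "j = 0")
      case True thus ?thesis using m s by simp
    next
      case False
      have "pt e \<sigma> U j = pt e \<sigma> U' j" using p by simp
      thus ?thesis using m False j by (simp add: pt_eval)
    qed
  qed
  from indep[OF fin c this] show ?thesis by simp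
qed

lemma height_eq:
  assumes fin: "finite \<sigma>" and c: "card \<sigma> \<le> e+1" and U: "\<forall>t\<in>\<sigma>. 0 \<le> U t" "sum U \<sigma> = 1"
  shows "height e \<sigma> (pt e \<sigma> U) = (\<Sum>t\<in>\<sigma>. U t * t ^ (e+1))"
  unfolding height_def
proof (rule the_equality)
  have pr: "proj e (pt (e+1) \<sigma> U) = pt e \<sigma> U"
    by (rule ext) (simp add: proj_def pt_eval)
  show "\<exists>q\<in>conv (e + 1) \<sigma>. proj e q = pt e \<sigma> U \<and> q (e + 1) = (\<Sum>t\<in>\<sigma>. U t * t ^ (e + 1))"
  proof (rule bexI[of _ "pt (e+1) \<sigma> U"])
    show "pt (e+1) \<sigma> U \<in> conv (e+1) \<sigma>" unfolding conv_iff by (rule exI[of _ U]) (simp add: U)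
    show "proj e (pt (e + 1) \<sigma> U) = pt e \<sigma> U \<and> pt (e + 1) \<sigma> U (e + 1) = (\<Sum>t\<in>\<sigma>. U t * t ^ (e + 1))"
      using pr by (simp add: pt_eval)
  qed
next
  fix y assume "\<exists>q\<in>conv (e + 1) \<sigma>. proj e q = pt e \<sigma> U \<and> q (e + 1) = y"
  then obtain q where q: "q \<in> conv (e+1) \<sigma>" "proj e q = pt e \<sigma> U" "q (e + 1) = y" by blast
  from q(1) obtain U' where U': "\<forall>t\<in>\<sigma>. 0 \<le> U' t" "sum U' \<sigma> = 1" and qU: "q = pt (e+1) \<sigma> U'"
    unfolding conv_iff by blast
  have pq: "proj e (pt (e+1) \<sigma> U') = pt e \<sigma> U" and y: "pt (e+1) \<sigma> U' (e+1) = y"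
    using q qU by simp_all
  have "proj e (pt (e+1) \<sigma> U') = pt e \<sigma> U'"
    by (rule ext) (simp add: proj_def pt_eval)
  with pq have "pt e \<sigma> U' = pt e \<sigma> U" by simp
  from pt_unique[OF fin c _ this] U U' have eq: "\<forall>t\<in>\<sigma>. U' t = U t" by simp
  have "y = (\<Sum>t\<in>\<sigma>. U' t * t ^ (e+1))" using y by (simp add: pt_eval)
  also have "\<dots> = (\<Sum>t\<in>\<sigma>. U t * t ^ (e+1))" using eq by (intro sum.cong) auto
  finally show "y = (\<Sum>t\<in>\<sigma>. U t * t ^ (e+1))" .
qed



lemma mom_neg: "mom S (\<lambda>t. - l t) j = - mom S l j"
  by (simp add: mom_def sum_negf)

lemma valid_swap: "valid e \<tau> \<sigma> l \<Longrightarrow> valid e \<sigma> \<tau> (\<lambda>t. - l t)"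
  unfolding valid_def by (simp add: mom_neg Un_commute)

lemma conv_mono:
  assumes "finite \<sigma>" "A \<subseteq> \<sigma>"
  shows "conv e A \<subseteq> conv e \<sigma>"
proof
  fix p assume "p \<in> conv e A"
  then obtain V where V: "\<forall>t\<in>A. 0 \<le> V t" "sum V A = 1" "p = pt e A V" unfolding conv_iff by blast
  let ?V = "\<lambda>t. if t \<in> A then V t else 0"
  have "\<forall>t\<in>\<sigma>. 0 \<le> ?V t" using V by simp
  moreover have "sum ?V \<sigma> = 1" using sum_restrict1[OF assms, of V] V by simp
  moreover have "p = pt e \<sigma> ?V" using pt_restrict[OF assms, of e V] V by simp
  ultimately show "p \<in> conv e \<sigma>" unfolding conv_iff by (intro exI[of _ ?V]) simp
qed

lemma overlap_iff:
  assumes "finite \<sigma>" "finite \<tau>"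
  shows "overlap e \<sigma> \<tau> \<longleftrightarrow> (\<exists>p. p \<in> conv e \<sigma> \<and> p \<in> conv e \<tau> \<and> p \<notin> conv e (\<sigma> \<inter> \<tau>))"
proof -
  have "conv e (\<sigma> \<inter> \<tau>) \<subseteq> conv e \<sigma>" "conv e (\<sigma> \<inter> \<tau>) \<subseteq> conv e \<tau>"
    using conv_mono assms by auto
  thus ?thesis unfolding overlap_def by blast
qed

lemma mom_split:
  assumes "finite \<sigma>" "finite \<tau>"
  shows "mom (\<sigma>\<union>\<tau>) (\<lambda>t. (if t \<in> \<sigma> then u t else 0) - (if t \<in> \<tau> then w t else 0)) j
         = (\<Sum>t\<in>\<sigma>. u t * t ^ j) - (\<Sum>t\<in>\<tau>. w t * t ^ j)"
proof -
  have f: "finite (\<sigma>\<union>\<tau>)" using assms by simp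
  have "mom (\<sigma>\<union>\<tau>) (\<lambda>t. (if t \<in> \<sigma> then u t else 0) - (if t \<in> \<tau> then w t else 0)) j
     = (\<Sum>t\<in>\<sigma>\<union>\<tau>. (if t \<in> \<sigma> then u t else 0) * t ^ j) - (\<Sum>t\<in>\<sigma>\<union>\<tau>. (if t \<in> \<tau> then w t else 0) * t ^ j)"
    unfolding mom_def by (simp add: left_diff_distrib sum_subtractf)
  also have "\<dots> = (\<Sum>t\<in>\<sigma>. u t * t ^ j) - (\<Sum>t\<in>\<tau>. w t * t ^ j)"
    using sum_restrict[OF f, of \<sigma> u "\<lambda>t. t ^ j"] sum_restrict[OF f, of \<tau> w "\<lambda>t. t ^ j"] by simp
  finally show ?thesis .
qed

lemma G1:
  assumes fin: "finite \<sigma>" "finite \<tau>" and c: "card \<sigma> \<le> e+1" "card \<tau> \<le> e+1"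
    and p: "p \<in> conv e \<sigma>" "p \<in> conv e \<tau>"
  shows "\<exists>l. valid e \<sigma> \<tau> l \<and> height e \<sigma> p - height e \<tau> p = mom (\<sigma>\<union>\<tau>) l (e+1) \<and>
             (p \<notin> conv e (\<sigma> \<inter> \<tau>) \<longrightarrow> (\<exists>t\<in>\<sigma>\<union>\<tau>. l t \<noteq> 0))"
proof -
  from p(1) obtain u where u: "\<forall>t\<in>\<sigma>. 0 \<le> u t" "sum u \<sigma> = 1" and pu: "p = pt e \<sigma> u"
    unfolding conv_iff by blast
  from p(2) obtain w where w: "\<forall>t\<in>\<tau>. 0 \<le> w t" "sum w \<tau> = 1" and pw: "p = pt e \<tau> w"
    unfolding conv_iff by blast
  define l where "l = (\<lambda>t. (if t \<in> \<sigma> then u t else 0) - (if t \<in> \<tau> then w t else 0))"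
  have ms: "mom (\<sigma>\<union>\<tau>) l j = (\<Sum>t\<in>\<sigma>. u t * t ^ j) - (\<Sum>t\<in>\<tau>. w t * t ^ j)" for j
    unfolding l_def by (rule mom_split[OF fin])
  have valid: "valid e \<sigma> \<tau> l" unfolding valid_def
  proof (intro conjI allI impI ballI)
    fix j assume j: "j \<le> e"
    show "mom (\<sigma>\<union>\<tau>) l j = 0"
    proof (cases "j = 0")
      case True thus ?thesis using ms[of j] u w by simp
    next
      case False
      have "pt e \<sigma> u j = pt e \<tau> w j" using pu pw by simp
      thus ?thesis using ms[of j] False j by (simp add: pt_eval)
    qed
  next
    fix t assume "t \<in> \<sigma> - \<tau>" thus "0 \<le> l t" using u unfolding l_def by simp
  next
    fix t assume "t \<in> \<tau> - \<sigma>" thus "l t \<le> 0" using w unfolding l_def by simp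
  qed
  have h: "height e \<sigma> p - height e \<tau> p = mom (\<sigma>\<union>\<tau>) l (e+1)"
    using height_eq[OF fin(1) c(1) u] height_eq[OF fin(2) c(2) w] ms[of "e+1"] pu pw by simp
  have nz: "\<exists>t\<in>\<sigma>\<union>\<tau>. l t \<noteq> 0" if np: "p \<notin> conv e (\<sigma> \<inter> \<tau>)"
  proof (rule ccontr)
    assume na: "\<not> (\<exists>t\<in>\<sigma>\<union>\<tau>. l t \<noteq> 0)"
    have z: "\<forall>t\<in>\<sigma>-\<tau>. u t = 0"
    proof
      fix t assume t: "t \<in> \<sigma>-\<tau>"
      hence "l t = 0" using na by auto
      thus "u t = 0" using t unfolding l_def by simp
    qed
    have s1: "sum u (\<sigma> \<inter> \<tau>) = sum u \<sigma>"
      by (rule sum.mono_neutral_left) (use fin z in auto)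
    have s2: "pt e (\<sigma> \<inter> \<tau>) u = pt e \<sigma> u"
    proof (rule ext)
      fix i
      show "pt e (\<sigma> \<inter> \<tau>) u i = pt e \<sigma> u i"
        unfolding pt_def by (rule sum.mono_neutral_left) (use fin z in auto)
    qed
    have "p \<in> conv e (\<sigma> \<inter> \<tau>)" unfolding conv_iff
      by (rule exI[of _ u]) (use u s1 s2 pu in simp)
    with np show False by simp
  qed
  show ?thesis using valid h nz by blast
qed

lemma G2:
  assumes fin: "finite \<sigma>" "finite \<tau>" and c: "card \<sigma> \<le> e+1" "card \<tau> \<le> e+1"
    and v: "valid e \<sigma> \<tau> m" and nz: "\<exists>t\<in>\<sigma>\<union>\<tau>. m t \<noteq> 0"
  shows "\<exists>p Sc. Sc > 0 \<and> p \<in> conv e \<sigma> \<and> p \<in> conv e \<tau> \<and> p \<notin> conv e (\<sigma> \<inter> \<tau>) \<and>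
           height e \<sigma> p - height e \<tau> p = mom (\<sigma>\<union>\<tau>) m (e+1) / Sc"
proof -
  have finU: "finite (\<sigma>\<union>\<tau>)" using fin by simp
  define mp where "mp = (\<lambda>t. max (m t) 0)"
  define mn where "mn = (\<lambda>t. max (- m t) 0)"
  have mpn: "m t = mp t - mn t" for t unfolding mp_def mn_def by auto
  have mp0: "mp t \<ge> 0" "mn t \<ge> 0" for t unfolding mp_def mn_def by auto
  have m0: "mom (\<sigma>\<union>\<tau>) m j = 0" if "j \<le> e" for j using v that unfolding valid_def by blast
  have sg1: "\<forall>t\<in>\<sigma>-\<tau>. m t \<ge> 0" and sg2: "\<forall>t\<in>\<tau>-\<sigma>. m t \<le> 0" using v unfolding valid_def by auto
  have mnz: "mn t = 0" if "t \<in> \<sigma> - \<tau>" for t using sg1 that unfolding mn_def by auto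
  have mpz: "mp t = 0" if "t \<in> \<tau> - \<sigma>" for t using sg2 that unfolding mp_def by auto
  have sp: "(\<Sum>t\<in>\<sigma>. mp t * g t) = (\<Sum>t\<in>\<sigma>\<union>\<tau>. mp t * g t)" for g
    by (rule sum.mono_neutral_left) (use finU mpz in auto)
  have sn: "(\<Sum>t\<in>\<tau>. mn t * g t) = (\<Sum>t\<in>\<sigma>\<union>\<tau>. mn t * g t)" for g
    by (rule sum.mono_neutral_left) (use finU mnz in auto)
  have dif: "(\<Sum>t\<in>\<sigma>. mp t * t ^ j) - (\<Sum>t\<in>\<tau>. mn t * t ^ j) = mom (\<sigma>\<union>\<tau>) m j" for j
  proof -
    have "(\<Sum>t\<in>\<sigma>. mp t * t ^ j) - (\<Sum>t\<in>\<tau>. mn t * t ^ j)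
        = (\<Sum>t\<in>\<sigma>\<union>\<tau>. mp t * t ^ j) - (\<Sum>t\<in>\<sigma>\<union>\<tau>. mn t * t ^ j)" using sp sn by simp
    also have "\<dots> = (\<Sum>t\<in>\<sigma>\<union>\<tau>. (mp t - mn t) * t ^ j)" by (simp add: left_diff_distrib sum_subtractf)
    also have "\<dots> = mom (\<sigma>\<union>\<tau>) m j" unfolding mom_def by (simp add: mpn)
    finally show ?thesis .
  qed
  define Sc where "Sc = (\<Sum>t\<in>\<sigma>\<union>\<tau>. mp t)"
  have Sc_eq: "(\<Sum>t\<in>\<sigma>. mp t) = Sc" "(\<Sum>t\<in>\<tau>. mn t) = Sc"
  proof -
    show "(\<Sum>t\<in>\<sigma>. mp t) = Sc" using sp[of "\<lambda>_. 1"] unfolding Sc_def by simp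
    have "(\<Sum>t\<in>\<sigma>. mp t * 1) - (\<Sum>t\<in>\<tau>. mn t * 1) = 0" using dif[of 0] m0[of 0] by simp
    thus "(\<Sum>t\<in>\<tau>. mn t) = Sc" using sp[of "\<lambda>_. 1"] unfolding Sc_def by simp
  qed
  have Scpos: "Sc > 0"
  proof (rule ccontr)
    assume "\<not> Sc > 0"
    moreover have "Sc \<ge> 0" unfolding Sc_def by (rule sum_nonneg) (simp add: mp0)
    ultimately have "Sc = 0" by simp
    hence a: "\<forall>t\<in>\<sigma>\<union>\<tau>. mp t = 0" unfolding Sc_def using sum_nonneg_eq_0_iff[OF finU] mp0 by blast
    have "(\<Sum>t\<in>\<sigma>\<union>\<tau>. mn t) = 0" using Sc_eq(2) sn[of "\<lambda>_. 1"] \<open>Sc = 0\<close> by simp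
    hence b: "\<forall>t\<in>\<sigma>\<union>\<tau>. mn t = 0" using sum_nonneg_eq_0_iff[OF finU] mp0 by blast
    from nz obtain t where "t \<in> \<sigma>\<union>\<tau>" "m t \<noteq> 0" by blast
    with a b mpn show False by simp
  qed
  define U where "U = (\<lambda>t. mp t / Sc)"
  define W where "W = (\<lambda>t. mn t / Sc)"
  have U: "\<forall>t\<in>\<sigma>. 0 \<le> U t" "sum U \<sigma> = 1"
    using Scpos mp0 Sc_eq unfolding U_def by (auto simp: sum_divide_distrib[symmetric])
  have W: "\<forall>t\<in>\<tau>. 0 \<le> W t" "sum W \<tau> = 1"
    using Scpos mp0 Sc_eq unfolding W_def by (auto simp: sum_divide_distrib[symmetric])
  have UW: "(\<Sum>t\<in>\<sigma>. U t * t ^ j) - (\<Sum>t\<in>\<tau>. W t * t ^ j) = mom (\<sigma>\<union>\<tau>) m j / Sc" for j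
  proof -
    have "(\<Sum>t\<in>\<sigma>. U t * t ^ j) = (\<Sum>t\<in>\<sigma>. mp t * t ^ j) / Sc"
      unfolding U_def by (simp add: sum_divide_distrib)
    moreover have "(\<Sum>t\<in>\<tau>. W t * t ^ j) = (\<Sum>t\<in>\<tau>. mn t * t ^ j) / Sc"
      unfolding W_def by (simp add: sum_divide_distrib)
    ultimately have "(\<Sum>t\<in>\<sigma>. U t * t ^ j) - (\<Sum>t\<in>\<tau>. W t * t ^ j)
        = ((\<Sum>t\<in>\<sigma>. mp t * t ^ j) - (\<Sum>t\<in>\<tau>. mn t * t ^ j)) / Sc" by (simp add: diff_divide_distrib)
    thus ?thesis using dif[of j] by simp
  qed
  define p where "p = pt e \<sigma> U"
  have pW: "p = pt e \<tau> W"
  proof (rule ext)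
    fix i
    show "p i = pt e \<tau> W i"
    proof (cases "1 \<le> i \<and> i \<le> e")
      case True
      have "mom (\<sigma>\<union>\<tau>) m i = 0" using m0 True by simp
      thus ?thesis using UW[of i] True unfolding p_def by (simp add: pt_eval)
    qed (auto simp: p_def pt_eval)
  qed
  have pc1: "p \<in> conv e \<sigma>" unfolding conv_iff p_def by (rule exI[of _ U]) (simp add: U)
  have pc2: "p \<in> conv e \<tau>" unfolding conv_iff pW by (rule exI[of _ W]) (simp add: W)
  have h: "height e \<sigma> p - height e \<tau> p = mom (\<sigma>\<union>\<tau>) m (e+1) / Sc"
    using height_eq[OF fin(1) c(1) U] height_eq[OF fin(2) c(2) W] UW[of "e+1"] p_def pW by simp
  have np: "p \<notin> conv e (\<sigma> \<inter> \<tau>)"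
  proof
    assume "p \<in> conv e (\<sigma> \<inter> \<tau>)"
    then obtain V where V: "\<forall>t\<in>\<sigma>\<inter>\<tau>. 0 \<le> V t" "sum V (\<sigma>\<inter>\<tau>) = 1" and pV: "p = pt e (\<sigma>\<inter>\<tau>) V"
      unfolding conv_iff by blast
    let ?V = "\<lambda>t. if t \<in> \<sigma>\<inter>\<tau> then V t else 0"
    have e1: "\<forall>t\<in>\<sigma>. U t = ?V t"
    proof (rule pt_unique[OF fin(1) c(1)])
      show "sum U \<sigma> = sum ?V \<sigma>" using U V sum_restrict1[OF fin(1), of "\<sigma>\<inter>\<tau>" V] by simp
      show "pt e \<sigma> U = pt e \<sigma> ?V" using pt_restrict[OF fin(1), of "\<sigma>\<inter>\<tau>" e V] pV p_def by simp
    qed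
    have e2: "\<forall>t\<in>\<tau>. W t = ?V t"
    proof (rule pt_unique[OF fin(2) c(2)])
      show "sum W \<tau> = sum ?V \<tau>" using W V sum_restrict1[OF fin(2), of "\<sigma>\<inter>\<tau>" V] by simp
      show "pt e \<tau> W = pt e \<tau> ?V" using pt_restrict[OF fin(2), of "\<sigma>\<inter>\<tau>" e V] pV pW by simp
    qed
    have "m t = 0" if t: "t \<in> \<sigma>\<union>\<tau>" for t
    proof -
      consider "t \<in> \<sigma> - \<tau>" | "t \<in> \<tau> - \<sigma>" | "t \<in> \<sigma> \<inter> \<tau>" using t by blast
      thus ?thesis
      proof cases
        case 1
        hence "mp t = 0" using e1 Scpos unfolding U_def by auto
        thus ?thesis using mnz[OF 1] mpn by simp
      next
        case 2
        hence "mn t = 0" using e2 Scpos unfolding W_def by auto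
        thus ?thesis using mpz[OF 2] mpn by simp
      next
        case 3
        hence "U t = W t" using e1 e2 by auto
        hence "mp t = mn t" using Scpos unfolding U_def W_def by simp
        thus ?thesis using mpn by simp
      qed
    qed
    with nz show False by blast
  qed
  show ?thesis using Scpos pc1 pc2 np h by blast
qed

lemma N1:
  assumes fin: "finite \<sigma>" "finite \<tau>" and c: "card \<sigma> \<le> e+1" "card \<tau> \<le> e+1"
  shows "overlap e \<sigma> \<tau> \<longleftrightarrow> interlacing (e+2) \<sigma> \<tau>"
proof
  assume "overlap e \<sigma> \<tau>"
  then obtain p where p: "p \<in> conv e \<sigma>" "p \<in> conv e \<tau>" "p \<notin> conv e (\<sigma> \<inter> \<tau>)"
    using overlap_iff[OF fin] by blast
  from G1[OF fin c p(1,2)] p(3) obtain l where v: "valid e \<sigma> \<tau> l" and nz: "\<exists>t\<in>\<sigma>\<union>\<tau>. l t \<noteq> 0"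
    by blast
  have "alt l (\<sigma>\<union>\<tau>) (e+2)" using SC[of "\<sigma>\<union>\<tau>" e l] fin v nz unfolding valid_def by simp
  thus "interlacing (e+2) \<sigma> \<tau>" using alt_interl v unfolding valid_def by blast
next
  assume "interlacing (e+2) \<sigma> \<tau>"
  then obtain l where v: "valid e \<sigma> \<tau> l" and nz: "\<exists>t\<in>\<sigma>\<union>\<tau>. l t \<noteq> 0"
  proof (cases "interlacing_from (e+2) \<sigma> \<tau>")
    case True
    from L_from[OF fin True] show ?thesis using that by blast
  next
    case False
    hence "interlacing_from (e+2) \<tau> \<sigma>" using \<open>interlacing (e+2) \<sigma> \<tau>\<close> unfolding interlacing_def by simp
    from L_from[OF fin(2,1) this] obtain l where "valid e \<tau> \<sigma> l" "\<exists>t\<in>\<tau>\<union>\<sigma>. l t \<noteq> 0" by blast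
    hence "valid e \<sigma> \<tau> (\<lambda>t. - l t)" "\<exists>t\<in>\<sigma>\<union>\<tau>. - l t \<noteq> 0" using valid_swap by auto
    thus ?thesis using that by blast
  qed
  from G2[OF fin c v nz] show "overlap e \<sigma> \<tau>" using overlap_iff[OF fin] by blast
qed



lemma interl_shift:
  assumes "interlacing_from (Suc k) A B"
  shows "interlacing_from k A B \<and> interlacing_from k B A"
proof -
  from assms obtain v where smo: "strict_mono_on {..<Suc k} v"
    and vm: "\<forall>i<Suc k. if even i then v i \<in> A else v i \<in> B" unfolding interlacing_from_def by blast
  have "interlacing_from k A B" unfolding interlacing_from_def
  proof (intro exI[of _ v] conjI allI impI)
    show "strict_mono_on {..<k} v" by (rule strict_mono_onI) (use strict_mono_onD[OF smo] in auto)
    fix i assume "i < k" thus "if even i then v i \<in> A else v i \<in> B" using vm by simp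
  qed
  moreover have "interlacing_from k B A" unfolding interlacing_from_def
  proof (intro exI[of _ "\<lambda>i. v (Suc i)"] conjI allI impI)
    show "strict_mono_on {..<k} (\<lambda>i. v (Suc i))" by (rule strict_mono_onI) (use strict_mono_onD[OF smo] in auto)
    fix i assume "i < k" thus "if even i then v (Suc i) \<in> B else v (Suc i) \<in> A"
      using vm[rule_format, of "Suc i"] by simp
  qed
  ultimately show ?thesis by simp
qed

lemma interl3:
  assumes "interlacing (Suc k) \<sigma> \<tau>"
  shows "interlacing_from k \<sigma> \<tau> \<and> interlacing_from k \<tau> \<sigma>"
  using assms interl_shift unfolding interlacing_def by blast

lemma interl_comm: "interlacing k \<tau> \<sigma> = interlacing k \<sigma> \<tau>"
  unfolding interlacing_def by blast

lemma mom_lin: "mom S (\<lambda>t. a * f t + g t) j = a * mom S f j + mom S g j"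
  unfolding mom_def by (simp add: algebra_simps sum.distrib sum_distrib_left)

lemma pointed:
  assumes fin: "finite \<sigma>" "finite \<tau>" and c: "card \<sigma> \<le> e+1"
    and va: "valid e \<sigma> \<tau> a" and vb: "valid e \<sigma> \<tau> b" and s: "\<forall>t\<in>\<sigma>\<union>\<tau>. a t + b t = 0"
  shows "\<forall>t\<in>\<sigma>\<union>\<tau>. a t = 0"
proof -
  have z1: "a t = 0" if "t \<in> \<sigma> - \<tau>" for t
  proof -
    have "a t \<ge> 0" "b t \<ge> 0" using va vb that unfolding valid_def by auto
    thus ?thesis using s that by force
  qed
  have z2: "a t = 0" if "t \<in> \<tau> - \<sigma>" for t
  proof -
    have "a t \<le> 0" "b t \<le> 0" using va vb that unfolding valid_def by auto
    thus ?thesis using s that by force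
  qed
  have fU: "finite (\<sigma>\<union>\<tau>)" using fin by simp
  have "\<forall>j\<le>e. mom (\<sigma>\<inter>\<tau>) a j = 0"
  proof (intro allI impI)
    fix j assume j: "j \<le> e"
    have "mom (\<sigma>\<inter>\<tau>) a j = mom (\<sigma>\<union>\<tau>) a j"
      unfolding mom_def by (rule sum.mono_neutral_left) (use fU z1 z2 in auto)
    thus "mom (\<sigma>\<inter>\<tau>) a j = 0" using va j unfolding valid_def by simp
  qed
  moreover have "card (\<sigma>\<inter>\<tau>) \<le> e+1" using c card_mono[OF fin(1), of "\<sigma>\<inter>\<tau>"] by simp
  ultimately have "\<forall>t\<in>\<sigma>\<inter>\<tau>. a t = 0" using indep[of "\<sigma>\<inter>\<tau>" e a] fin by simp
  thus ?thesis using z1 z2 by blast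
qed

lemma pos_exists:
  assumes fin: "finite \<sigma>" "finite \<tau>" and c: "card \<sigma> \<le> d+1" "card \<tau> \<le> d+1"
    and I: "interlacing_from (d+2) \<sigma> \<tau>"
  shows "\<exists>p. p \<in> conv d \<sigma> \<and> p \<in> conv d \<tau> \<and> (-1) ^ (d+1) * (height d \<sigma> p - height d \<tau> p) > 0"
proof -
  from L_from[OF fin I] obtain l where v: "valid d \<sigma> \<tau> l" and nz: "\<exists>t\<in>\<sigma>\<union>\<tau>. l t \<noteq> 0"
    and m: "mom (\<sigma>\<union>\<tau>) l (d+1) = (-1) ^ (d+1)" by blast
  from G2[OF fin c v nz] obtain p Sc where Sc: "Sc > 0" and p: "p \<in> conv d \<sigma>" "p \<in> conv d \<tau>"
    and h: "height d \<sigma> p - height d \<tau> p = mom (\<sigma>\<union>\<tau>) l (d+1) / Sc" by blast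
  have "(-1::real) ^ (d+1) * (-1) ^ (d+1) = 1" by (simp add: power_mult_distrib[symmetric])
  hence q: "(-1) ^ (d+1) * (height d \<sigma> p - height d \<tau> p) = 1 / Sc" using h m by simp
  show ?thesis
  proof (intro exI[of _ p] conjI)
    show "p \<in> conv d \<sigma>" "p \<in> conv d \<tau>" by (fact p)+
    show "(-1) ^ (d+1) * (height d \<sigma> p - height d \<tau> p) > 0" unfolding q using Sc by simp
  qed
qed

lemma all_nonneg:
  assumes fin: "finite \<sigma>" "finite \<tau>" and c: "card \<sigma> \<le> d+1" "card \<tau> \<le> d+1"
    and n3: "\<not> interlacing (d+3) \<sigma> \<tau>" and I: "interlacing_from (d+2) \<sigma> \<tau>"
    and p: "p \<in> conv d \<sigma>" "p \<in> conv d \<tau>"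
  shows "(-1) ^ (d+1) * (height d \<sigma> p - height d \<tau> p) \<ge> 0"
proof (rule ccontr)
  define \<epsilon> :: real where "\<epsilon> = (-1) ^ (d+1)"
  have eps: "\<epsilon> = 1 \<or> \<epsilon> = -1" unfolding \<epsilon>_def by (cases "even d") simp_all
  assume neg: "\<not> ?thesis"
  from G1[OF fin c p] obtain lp where vp: "valid d \<sigma> \<tau> lp"
    and hp: "height d \<sigma> p - height d \<tau> p = mom (\<sigma>\<union>\<tau>) lp (d+1)" by blast
  define m where "m = mom (\<sigma>\<union>\<tau>) lp (d+1)"
  have em: "\<epsilon> * m < 0" using neg hp unfolding m_def \<epsilon>_def by simp
  from L_from[OF fin I] obtain l1 where v1: "valid d \<sigma> \<tau> l1" and nz1: "\<exists>t\<in>\<sigma>\<union>\<tau>. l1 t \<noteq> 0"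
    and m1: "mom (\<sigma>\<union>\<tau>) l1 (d+1) = \<epsilon>" unfolding \<epsilon>_def by blast
  define L where "L = (\<lambda>t. \<bar>m\<bar> * l1 t + lp t)"
  have mL: "mom (\<sigma>\<union>\<tau>) L j = \<bar>m\<bar> * mom (\<sigma>\<union>\<tau>) l1 j + mom (\<sigma>\<union>\<tau>) lp j" for j
    unfolding L_def by (rule mom_lin)
  have mz: "\<bar>m\<bar> * \<epsilon> + m = 0" using eps em by auto
  have va: "valid d \<sigma> \<tau> (\<lambda>t. \<bar>m\<bar> * l1 t)"
    using v1 unfolding valid_def mom_def
    by (simp add: sum_distrib_left[symmetric] mult.assoc mult_nonneg_nonpos)
  have sg1: "\<forall>t\<in>\<sigma>-\<tau>. L t \<ge> 0" and sg2: "\<forall>t\<in>\<tau>-\<sigma>. L t \<le> 0"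
    using va vp unfolding valid_def L_def by (auto intro: add_nonneg_nonneg add_nonpos_nonpos)
  have mom0: "\<forall>j\<le>d+1. mom (\<sigma>\<union>\<tau>) L j = 0"
  proof (intro allI impI)
    fix j assume j: "j \<le> d+1"
    show "mom (\<sigma>\<union>\<tau>) L j = 0"
    proof (cases "j = d+1")
      case True thus ?thesis using mL m1 mz unfolding m_def by simp
    next
      case False
      thus ?thesis using mL v1 vp j unfolding valid_def by simp
    qed
  qed
  have nzL: "\<exists>t\<in>\<sigma>\<union>\<tau>. L t \<noteq> 0"
  proof (rule ccontr)
    assume "\<not> ?thesis"
    hence "\<forall>t\<in>\<sigma>\<union>\<tau>. \<bar>m\<bar> * l1 t + lp t = 0" unfolding L_def by auto
    from pointed[OF fin c(1) va vp this] have "\<forall>t\<in>\<sigma>\<union>\<tau>. \<bar>m\<bar> * l1 t = 0" .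
    moreover have "m \<noteq> 0" using em by auto
    ultimately show False using nz1 by auto
  qed
  have "alt L (\<sigma>\<union>\<tau>) (d+1+2)" using SC[of "\<sigma>\<union>\<tau>" "d+1" L] fin mom0 nzL by simp
  hence "interlacing (d+1+2) \<sigma> \<tau>" using alt_interl sg1 sg2 by blast
  with n3 show False by (simp add: numeral_3_eq_3)
qed

lemma B_char:
  assumes fin: "finite \<sigma>" "finite \<tau>" and c: "card \<sigma> \<le> d+1" "card \<tau> \<le> d+1"
  shows "below d \<sigma> \<tau> \<longleftrightarrow> (if even d
                 then interlacing_from (d + 2) \<sigma> \<tau> \<and> \<not> interlacing_from (d + 2) \<tau> \<sigma>
                 else interlacing_from (d + 2) \<tau> \<sigma> \<and> \<not> interlacing_from (d + 2) \<sigma> \<tau>)"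
proof -
  let ?Is = "interlacing_from (d + 2) \<sigma> \<tau>" and ?It = "interlacing_from (d + 2) \<tau> \<sigma>"
  have ov: "overlap d \<sigma> \<tau> \<longleftrightarrow> ?Is \<or> ?It" using N1[OF fin c] unfolding interlacing_def .
  have I3: "interlacing (d+3) \<sigma> \<tau> \<Longrightarrow> ?Is \<and> ?It" using interl3[of "d+2"] by (simp add: numeral_3_eq_3)
  have I3': "\<not> interlacing (d+3) \<tau> \<sigma> \<longleftrightarrow> \<not> interlacing (d+3) \<sigma> \<tau>" using interl_comm by blast
  have bel: "below d \<sigma> \<tau> \<longleftrightarrow> overlap d \<sigma> \<tau> \<and> (\<forall>p. p \<in> conv d \<sigma> \<and> p \<in> conv d \<tau> \<longrightarrow> height d \<sigma> p \<le> height d \<tau> p)"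
    unfolding below_def by blast
  show ?thesis
  proof (cases "even d")
    case True
    hence e: "(-1::real) ^ (d+1) = -1" by simp
    show ?thesis
    proof
      assume b: "below d \<sigma> \<tau>"
      have "\<not> ?It"
      proof
        assume ?It
        from pos_exists[OF fin(2,1) c(2,1) this] obtain p where "p \<in> conv d \<tau>" "p \<in> conv d \<sigma>"
          "(-1) ^ (d+1) * (height d \<tau> p - height d \<sigma> p) > 0" by blast
        with b bel e show False by force
      qed
      thus "if even d then ?Is \<and> \<not> ?It else ?It \<and> \<not> ?Is" using b bel ov True by simp
    next
      assume "if even d then ?Is \<and> \<not> ?It else ?It \<and> \<not> ?Is"
      hence a: "?Is" "\<not> ?It" using True by auto
      have n3: "\<not> interlacing (d+3) \<sigma> \<tau>" using I3 a by blast
      have "height d \<sigma> p \<le> height d \<tau> p" if "p \<in> conv d \<sigma>" "p \<in> conv d \<tau>" for p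
        using all_nonneg[OF fin c n3 a(1) that] e by simp
      thus "below d \<sigma> \<tau>" using bel ov a by blast
    qed
  next
    case False
    hence e: "(-1::real) ^ (d+1) = 1" by simp
    show ?thesis
    proof
      assume b: "below d \<sigma> \<tau>"
      have "\<not> ?Is"
      proof
        assume ?Is
        from pos_exists[OF fin c this] obtain p where "p \<in> conv d \<sigma>" "p \<in> conv d \<tau>"
          "(-1) ^ (d+1) * (height d \<sigma> p - height d \<tau> p) > 0" by blast
        with b bel e show False by force
      qed
      thus "if even d then ?Is \<and> \<not> ?It else ?It \<and> \<not> ?Is" using b bel ov False by simp
    next
      assume "if even d then ?Is \<and> \<not> ?It else ?It \<and> \<not> ?Is"
      hence a: "?It" "\<not> ?Is" using False by auto
      have n3: "\<not> interlacing (d+3) \<tau> \<sigma>" using I3 I3' a by blast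
      have "height d \<sigma> p \<le> height d \<tau> p" if "p \<in> conv d \<sigma>" "p \<in> conv d \<tau>" for p
        using all_nonneg[OF fin(2,1) c(2,1) n3 a(1) that(2,1)] e by simp
      thus "below d \<sigma> \<tau>" using bel ov a by blast
    qed
  qed
qed

lemma both_I3:
  assumes fin: "finite \<sigma>" "finite \<tau>" and c: "card \<sigma> \<le> d+1" "card \<tau> \<le> d+1"
    and Is: "interlacing_from (d+2) \<sigma> \<tau>" and It: "interlacing_from (d+2) \<tau> \<sigma>"
  shows "interlacing (d+3) \<sigma> \<tau>"
proof (rule ccontr)
  assume n3: "\<not> ?thesis"
  from pos_exists[OF fin(2,1) c(2,1) It] obtain p where p: "p \<in> conv d \<tau>" "p \<in> conv d \<sigma>"
    "(-1) ^ (d+1) * (height d \<tau> p - height d \<sigma> p) > 0" by blast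
  have "(-1) ^ (d+1) * (height d \<sigma> p - height d \<tau> p) \<ge> 0"
    using all_nonneg[OF fin c n3 Is p(2,1)] .
  with p(3) show False by (simp add: algebra_simps)
qed


theorem corollary2p5:
  fixes d :: nat and \<sigma> \<tau> :: "real set"
  assumes "1 \<le> d" and "simplex_on d \<sigma>" and "simplex_on d \<tau>"
  defines "A \<equiv> \<not> overlap d \<sigma> \<tau>"
      and "B \<equiv> below d \<sigma> \<tau>"
      and "C \<equiv> below d \<tau> \<sigma>"
      and "D \<equiv> overlap (d + 1) \<sigma> \<tau>"
  shows "((A \<or> B \<or> C \<or> D) \<and> \<not> (A \<and> B) \<and> \<not> (A \<and> C) \<and> \<not> (A \<and> D)
           \<and> \<not> (B \<and> C) \<and> \<not> (B \<and> D) \<and> \<not> (C \<and> D))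
         \<and> (A \<longleftrightarrow> \<not> interlacing (d + 2) \<sigma> \<tau>)
         \<and> (B \<longleftrightarrow> (if even d
                 then interlacing_from (d + 2) \<sigma> \<tau> \<and> \<not> interlacing_from (d + 2) \<tau> \<sigma>
                 else interlacing_from (d + 2) \<tau> \<sigma> \<and> \<not> interlacing_from (d + 2) \<sigma> \<tau>))
         \<and> (C \<longleftrightarrow> (if even d
                 then interlacing_from (d + 2) \<tau> \<sigma> \<and> \<not> interlacing_from (d + 2) \<sigma> \<tau>
                 else interlacing_from (d + 2) \<sigma> \<tau> \<and> \<not> interlacing_from (d + 2) \<tau> \<sigma>))
         \<and> (D \<longleftrightarrow> interlacing (d + 3) \<sigma> \<tau>)"
proof -
  have fin: "finite \<sigma>" "finite \<tau>" and c: "card \<sigma> \<le> d+1" "card \<tau> \<le> d+1"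
    using assms(2,3) unfolding simplex_on_def by auto
  have hA: "A \<longleftrightarrow> \<not> interlacing (d + 2) \<sigma> \<tau>" unfolding A_def using N1[OF fin c] by simp
  have e3: "d + 1 + 2 = d + 3" by simp
  have hD: "D \<longleftrightarrow> interlacing (d + 3) \<sigma> \<tau>" unfolding D_def
    using N1[of \<sigma> \<tau> "d+1"] fin c unfolding e3 by simp
  have hB: "B \<longleftrightarrow> (if even d
                 then interlacing_from (d + 2) \<sigma> \<tau> \<and> \<not> interlacing_from (d + 2) \<tau> \<sigma>
                 else interlacing_from (d + 2) \<tau> \<sigma> \<and> \<not> interlacing_from (d + 2) \<sigma> \<tau>)"
    unfolding B_def by (rule B_char[OF fin c])
  have hC: "C \<longleftrightarrow> (if even d
                 then interlacing_from (d + 2) \<tau> \<sigma> \<and> \<not> interlacing_from (d + 2) \<sigma> \<tau>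
                 else interlacing_from (d + 2) \<sigma> \<tau> \<and> \<not> interlacing_from (d + 2) \<tau> \<sigma>)"
    unfolding C_def by (rule B_char[OF fin(2,1) c(2,1)])
  have s3: "d + 3 = Suc (d + 2)" by simp
  have I3: "interlacing (d + 3) \<sigma> \<tau> \<Longrightarrow> interlacing_from (d + 2) \<sigma> \<tau> \<and> interlacing_from (d + 2) \<tau> \<sigma>"
    unfolding s3 by (rule interl3)
  have both: "interlacing_from (d + 2) \<sigma> \<tau> \<Longrightarrow> interlacing_from (d + 2) \<tau> \<sigma> \<Longrightarrow> interlacing (d + 3) \<sigma> \<tau>"
    by (rule both_I3[OF fin c])
  have i2: "interlacing (d + 2) \<sigma> \<tau> \<longleftrightarrow> interlacing_from (d + 2) \<sigma> \<tau> \<or> interlacing_from (d + 2) \<tau> \<sigma>"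
    unfolding interlacing_def ..
  show ?thesis
  proof (cases "even d")
    case True
    then show ?thesis using hA hB hC hD I3 both i2 by auto
  next
    case False
    then show ?thesis using hA hB hC hD I3 both i2 by auto
  qed
qed

end
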